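(* Let $\rho$ be an $i$-polymatroid on a finite set $E$ and let $\rho^*$ be its $i$-dual. If $M_1,\dots,M_i$ are matroids on $E$ with $\rho=r_{M_1}+\cdots+r_{M_i}$, then $\rho^*=r_{M_1^*}+\cdots+r_{M_i^*}$. More generally, if $k\ge i$ and $M_1,\dots,M_k$ are matroids on $E$ with $\rho=r_{M_1}+\cdots+r_{M_k}$, then there are matroids $M'_1,\dots,M'_k$ on $E$ with $\rho^*=r_{M'_1}+\cdots+r_{M'_k}$ such that, for every $s\in[k]$, the matroid obtained from $M'_s$ by deleting its loops and coloops is the dual of the matroid obtained from $M_s$ by deleting its loops and coloops. Consequently, if $\min(\chi(\rho),\chi(\rho^* ))\ge i$, then $\chi(\rho)=\chi(\rho^* )$.
   Context: A polymatroid on $E$ is a function $\rho:2^E\to\mathbb{Z}$ that is normalized, non-decreasing and submodular; it is an $i$-polymatroid if $\rho(\{e\})\le i$ for all $e\in E$. The $i$-dual of an $i$-polymatroid $\rho$ is $\rho^*(X)=i|X|-\rho(E)+\rho(E-X)$ for $X\subseteq E$. $M^*$ denotes the dual matroid. The chromatic number $\chi(\rho)$ is the least positive integer $k$ such that $\rho=r_{M_1}+\cdots+r_{M_k}$ for some matroids $M_1,\dots,M_k$ on $E$, and $\infty$ if there is no such $k$. *)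

theory Defs
  imports "HOL-Library.Extended_Nat"
begin

text \<open>A matroid on the finite ground set E is represented by its rank function
  (only its values on subsets of E matter), via the standard rank axioms.\<close>

definition is_matroid_rank :: "'a set \<Rightarrow> ('a set \<Rightarrow> int) \<Rightarrow> bool" where
  "is_matroid_rank E r \<longleftrightarrow>
     (\<forall>X. X \<subseteq> E \<longrightarrow> 0 \<le> r X \<and> r X \<le> int (card X)) \<and>
     (\<forall>X Y. X \<subseteq> Y \<and> Y \<subseteq> E \<longrightarrow> r X \<le> r Y) \<and>
     (\<forall>X Y. X \<subseteq> E \<and> Y \<subseteq> E \<longrightarrow> r (X \<union> Y) + r (X \<inter> Y) \<le> r X + r Y)"

definition dual_rank :: "'a set \<Rightarrow> ('a set \<Rightarrow> int) \<Rightarrow> 'a set \<Rightarrow> int" where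
  "dual_rank E r X = int (card X) - r E + r (E - X)"

definition loops :: "'a set \<Rightarrow> ('a set \<Rightarrow> int) \<Rightarrow> 'a set" where
  "loops E r = {e \<in> E. r {e} = 0}"

definition coloops :: "'a set \<Rightarrow> ('a set \<Rightarrow> int) \<Rightarrow> 'a set" where
  "coloops E r = {e \<in> E. r (E - {e}) = r E - 1}"

text \<open>Ground set of the matroid obtained by deleting all loops and coloops.
  The deletion M \ D has ground set E - D and rank function r restricted to subsets of E - D.\<close>
definition core_ground :: "'a set \<Rightarrow> ('a set \<Rightarrow> int) \<Rightarrow> 'a set" where
  "core_ground E r = E - (loops E r \<union> coloops E r)"

definition same_matroid :: "'a set \<Rightarrow> ('a set \<Rightarrow> int) \<Rightarrow> ('a set \<Rightarrow> int) \<Rightarrow> bool" where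
  "same_matroid F r1 r2 \<longleftrightarrow> (\<forall>X. X \<subseteq> F \<longrightarrow> r1 X = r2 X)"

definition is_polymatroid :: "'a set \<Rightarrow> ('a set \<Rightarrow> int) \<Rightarrow> bool" where
  "is_polymatroid E \<rho> \<longleftrightarrow>
     \<rho> {} = 0 \<and>
     (\<forall>X Y. X \<subseteq> Y \<and> Y \<subseteq> E \<longrightarrow> \<rho> X \<le> \<rho> Y) \<and>
     (\<forall>X Y. X \<subseteq> E \<and> Y \<subseteq> E \<longrightarrow> \<rho> (X \<union> Y) + \<rho> (X \<inter> Y) \<le> \<rho> X + \<rho> Y)"

definition is_i_polymatroid :: "nat \<Rightarrow> 'a set \<Rightarrow> ('a set \<Rightarrow> int) \<Rightarrow> bool" where
  "is_i_polymatroid i E \<rho> \<longleftrightarrow> is_polymatroid E \<rho> \<and> (\<forall>e\<in>E. \<rho> {e} \<le> int i)"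

definition i_dual :: "nat \<Rightarrow> 'a set \<Rightarrow> ('a set \<Rightarrow> int) \<Rightarrow> 'a set \<Rightarrow> int" where
  "i_dual i E \<rho> X = int i * int (card X) - \<rho> E + \<rho> (E - X)"

definition sum_of_matroids :: "'a set \<Rightarrow> ('a set \<Rightarrow> int) \<Rightarrow> nat \<Rightarrow> (nat \<Rightarrow> 'a set \<Rightarrow> int) \<Rightarrow> bool" where
  "sum_of_matroids E \<rho> k M \<longleftrightarrow>
     (\<forall>s<k. is_matroid_rank E (M s)) \<and> (\<forall>X. X \<subseteq> E \<longrightarrow> \<rho> X = (\<Sum>s<k. M s X))"

definition chromatic_number :: "'a set \<Rightarrow> ('a set \<Rightarrow> int) \<Rightarrow> enat" where
  "chromatic_number E \<rho> =
     (if \<exists>k>0. \<exists>M. sum_of_matroids E \<rho> k M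
      then enat (LEAST k. k > 0 \<and> (\<exists>M. sum_of_matroids E \<rho> k M))
      else \<infinity>)"

end

theory Submission
  imports Defs
begin

context
  fixes E :: "'a set" and r :: "'a set \<Rightarrow> int"
  assumes fin: "finite E" and M: "is_matroid_rank E r"
begin

lemma mr_nonneg: "X \<subseteq> E \<Longrightarrow> 0 \<le> r X" using M unfolding is_matroid_rank_def by blast
lemma mr_card: "X \<subseteq> E \<Longrightarrow> r X \<le> int (card X)" using M unfolding is_matroid_rank_def by blast
lemma mr_mono: "X \<subseteq> Y \<Longrightarrow> Y \<subseteq> E \<Longrightarrow> r X \<le> r Y" using M unfolding is_matroid_rank_def by blast
lemma mr_submod: "X \<subseteq> E \<Longrightarrow> Y \<subseteq> E \<Longrightarrow> r (X \<union> Y) + r (X \<inter> Y) \<le> r X + r Y"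
  using M unfolding is_matroid_rank_def by blast
lemma mr_empty: "r {} = 0" using mr_nonneg[of "{}"] mr_card[of "{}"] by simp

lemma mr_add_loops: assumes "Y \<subseteq> E" "L \<subseteq> loops E r" shows "r (Y \<union> L) = r Y"
proof -
  have LE: "L \<subseteq> E" using assms(2) by (auto simp: loops_def)
  hence "finite L" using fin finite_subset by blast
  thus ?thesis using assms LE
  proof (induction L rule: finite_induct)
    case empty then show ?case by simp
  next
    case (insert x F)
    let ?A = "Y \<union> F"
    have AE: "?A \<subseteq> E" using insert by auto
    have xE: "x \<in> E" and rx: "r {x} = 0" using insert(5) by (auto simp: loops_def)
    have IH: "r ?A = r Y" using insert by auto
    have s: "r (?A \<union> {x}) + r (?A \<inter> {x}) \<le> r ?A + r {x}" by (rule mr_submod) (use AE xE in auto)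
    have "0 \<le> r (?A \<inter> {x})" using mr_nonneg[of "?A \<inter> {x}"] AE by blast
    moreover have "r ?A \<le> r (?A \<union> {x})" by (rule mr_mono) (use AE xE in auto)
    moreover have "Y \<union> insert x F = ?A \<union> {x}" by auto
    ultimately show ?case using s rx IH by simp
  qed
qed

lemma mr_loops_zero: "L \<subseteq> loops E r \<Longrightarrow> r L = 0"
  using mr_add_loops[of "{}" L] mr_empty by simp

lemma mr_add_coloops: assumes "Y \<subseteq> E" "K \<subseteq> coloops E r" "Y \<inter> K = {}"
  shows "r (Y \<union> K) = r Y + int (card K)"
proof -
  have KE: "K \<subseteq> E" using assms(2) by (auto simp: coloops_def)
  hence "finite K" using fin finite_subset by blast
  thus ?thesis using assms KE
  proof (induction K rule: finite_induct)
    case empty then show ?case by simp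
  next
    case (insert x F)
    let ?A = "Y \<union> F"
    have AE: "?A \<subseteq> E" using insert by auto
    have xE: "x \<in> E" and rx: "r (E - {x}) = r E - 1" using insert(5) by (auto simp: coloops_def)
    have xA: "x \<notin> ?A" using insert by auto
    have IH: "r ?A = r Y + int (card F)" using insert by auto
    have s: "r (?A \<union> {x}) + r (?A \<inter> {x}) \<le> r ?A + r {x}" by (rule mr_submod) (use AE xE in auto)
    have "?A \<inter> {x} = {}" using xA by auto
    hence i0: "r (?A \<inter> {x}) = 0" using mr_empty by simp
    have r1: "r {x} \<le> 1" using mr_card[of "{x}"] xE by simp
    have s2: "r ((?A \<union> {x}) \<union> (E - {x})) + r ((?A \<union> {x}) \<inter> (E - {x})) \<le> r (?A \<union> {x}) + r (E - {x})"
      using mr_submod[of "?A \<union> {x}" "E - {x}"] AE xE by auto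
    have u: "(?A \<union> {x}) \<union> (E - {x}) = E" using AE xE by auto
    have n: "(?A \<union> {x}) \<inter> (E - {x}) = ?A" using AE xA by auto
    have "Y \<union> insert x F = ?A \<union> {x}" by auto
    moreover have "card (insert x F) = card F + 1" using insert by simp
    ultimately show ?case using s i0 r1 s2 u n rx IH by simp
  qed
qed

lemma mr_loops_coloops_disj: "loops E r \<inter> coloops E r = {}"
proof (rule ccontr)
  assume "loops E r \<inter> coloops E r \<noteq> {}"
  then obtain e where e1: "e \<in> loops E r" and e2: "e \<in> coloops E r" by blast
  have eE: "e \<in> E" using e1 by (auto simp: loops_def)
  have "r ((E - {e}) \<union> {e}) = r (E - {e})" using mr_add_loops[of "E - {e}" "{e}"] e1 by auto
  moreover have "(E - {e}) \<union> {e} = E" using eE by auto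
  ultimately show False using e2 by (auto simp: coloops_def)
qed

lemma dual_is_matroid: "is_matroid_rank E (dual_rank E r)"
  unfolding is_matroid_rank_def dual_rank_def
proof (intro conjI allI impI)
  fix X assume X: "X \<subseteq> E"
  have "r ((E - X) \<union> X) + r ((E - X) \<inter> X) \<le> r (E - X) + r X" using mr_submod[of "E - X" X] X by auto
  moreover have "(E - X) \<union> X = E" "(E - X) \<inter> X = {}" using X by auto
  moreover have "r X \<le> int (card X)" using mr_card X by auto
  ultimately show "0 \<le> int (card X) - r E + r (E - X)" using mr_empty by simp
  show "int (card X) - r E + r (E - X) \<le> int (card X)" using mr_mono[of "E - X" E] by auto
next
  fix X Y assume XY: "X \<subseteq> Y \<and> Y \<subseteq> E"
  have "r ((E - Y) \<union> (Y - X)) + r ((E - Y) \<inter> (Y - X)) \<le> r (E - Y) + r (Y - X)"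
    using mr_submod[of "E - Y" "Y - X"] XY by auto
  moreover have "(E - Y) \<union> (Y - X) = E - X" "(E - Y) \<inter> (Y - X) = {}" using XY by auto
  moreover have "r (Y - X) \<le> int (card (Y - X))" using mr_card[of "Y - X"] XY by blast
  moreover have "card (Y - X) = card Y - card X" using XY fin by (meson card_Diff_subset finite_subset)
  moreover have "card X \<le> card Y" using XY fin by (meson card_mono finite_subset)
  ultimately show "int (card X) - r E + r (E - X) \<le> int (card Y) - r E + r (E - Y)"
    using mr_empty by simp
next
  fix X Y assume XY: "X \<subseteq> E \<and> Y \<subseteq> E"
  have "r ((E - X) \<union> (E - Y)) + r ((E - X) \<inter> (E - Y)) \<le> r (E - X) + r (E - Y)"
    using mr_submod[of "E - X" "E - Y"] by auto
  moreover have "(E - X) \<union> (E - Y) = E - (X \<inter> Y)" "(E - X) \<inter> (E - Y) = E - (X \<union> Y)" by auto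
  ultimately have a: "r (E - (X \<inter> Y)) + r (E - (X \<union> Y)) \<le> r (E - X) + r (E - Y)" by simp
  have "card (X \<union> Y) + card (X \<inter> Y) = card X + card Y"
    using XY fin card_Un_Int[of X Y] finite_subset by metis
  hence b: "int (card (X \<union> Y)) + int (card (X \<inter> Y)) = int (card X) + int (card Y)" by linarith
  show "int (card (X \<union> Y)) - r E + r (E - (X \<union> Y)) + (int (card (X \<inter> Y)) - r E + r (E - (X \<inter> Y)))
       \<le> int (card X) - r E + r (E - X) + (int (card Y) - r E + r (E - Y))"
    using a b by linarith
qed

end

lemma del_is_matroid:
  assumes M: "is_matroid_rank E r" and fin: "finite E" shows "is_matroid_rank E (\<lambda>X. r (X - L))"
  unfolding is_matroid_rank_def
proof (intro conjI allI impI)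
  fix X assume X: "X \<subseteq> E"
  have XL: "X - L \<subseteq> E" using X by blast
  show "0 \<le> r (X - L)" using mr_nonneg[OF fin M XL] .
  have "r (X - L) \<le> int (card (X - L))" using mr_card[OF fin M XL] .
  moreover have "card (X - L) \<le> card X" using X fin by (meson Diff_subset card_mono finite_subset)
  ultimately show "r (X - L) \<le> int (card X)" by simp
next
  fix X Y assume XY: "X \<subseteq> Y \<and> Y \<subseteq> E"
  have "X - L \<subseteq> Y - L" "Y - L \<subseteq> E" using XY by blast+
  then show "r (X - L) \<le> r (Y - L)" using mr_mono[OF fin M] by blast
next
  fix X Y assume XY: "X \<subseteq> E \<and> Y \<subseteq> E"
  have e: "(X \<union> Y) - L = (X - L) \<union> (Y - L)" "(X \<inter> Y) - L = (X - L) \<inter> (Y - L)" by auto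
  have "X - L \<subseteq> E" "Y - L \<subseteq> E" using XY by blast+
  then show "r (X \<union> Y - L) + r (X \<inter> Y - L) \<le> r (X - L) + r (Y - L)"
    unfolding e by (rule mr_submod[OF fin M])
qed

lemma core_decomp:
  assumes fin: "finite E" and M: "is_matroid_rank E r" and Y: "Y \<subseteq> core_ground E r"
  shows "r (Y \<union> coloops E r \<union> loops E r) = r Y + int (card (coloops E r))"
proof -
  have YE: "Y \<subseteq> E" using Y by (auto simp: core_ground_def)
  have KE: "coloops E r \<subseteq> E" by (auto simp: coloops_def)
  have d: "Y \<inter> coloops E r = {}" using Y by (auto simp: core_ground_def)
  have "r (Y \<union> coloops E r \<union> loops E r) = r (Y \<union> coloops E r)"
    by (rule mr_add_loops[OF fin M]) (use YE KE in auto)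
  also have "\<dots> = r Y + int (card (coloops E r))"
    by (rule mr_add_coloops[OF fin M YE _ d]) simp
  finally show ?thesis .
qed

context
  fixes E :: "'a set" and r :: "'a set \<Rightarrow> int" and L :: "'a set"
  assumes fin: "finite E" and M: "is_matroid_rank E r" and L: "L \<subseteq> loops E r"
begin

lemma LE: "L \<subseteq> E" using L by (auto simp: loops_def)

lemma mod_matroid: "is_matroid_rank E (\<lambda>X. dual_rank E r (X - L))"
  using del_is_matroid[OF dual_is_matroid[OF fin M] fin] .

lemma mod_val: assumes X: "X \<subseteq> E"
  shows "dual_rank E r (X - L) = dual_rank E r X - int (card (X \<inter> L))"
proof -
  have "E - (X - L) = (E - X) \<union> (X \<inter> L)" using X LE by auto
  moreover have "r ((E - X) \<union> (X \<inter> L)) = r (E - X)"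
    by (rule mr_add_loops[OF fin M]) (use L in auto)
  ultimately have a: "r (E - (X - L)) = r (E - X)" by simp
  have fX: "finite X" using X fin finite_subset by blast
  have "card (X - L) = card X - card (X \<inter> L)" using fX by (simp add: card_Diff_subset_Int)
  moreover have "card (X \<inter> L) \<le> card X" using fX by (simp add: card_mono)
  ultimately have "int (card (X - L)) = int (card X) - int (card (X \<inter> L))" by simp
  then show ?thesis using a by (simp add: dual_rank_def)
qed

lemma mod_loops: "loops E (\<lambda>X. dual_rank E r (X - L)) = L \<union> coloops E r"
proof (rule set_eqI)
  fix e
  show "e \<in> loops E (\<lambda>X. dual_rank E r (X - L)) \<longleftrightarrow> e \<in> L \<union> coloops E r"
  proof (cases "e \<in> L")
    case True
    then have "{e} - L = {}" by auto
    then show ?thesis using True LE by (auto simp: loops_def dual_rank_def)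
  next
    case False
    then have "{e} - L = {e}" by auto
    then show ?thesis using False by (auto simp: loops_def dual_rank_def coloops_def)
  qed
qed

lemma mod_coloops: "coloops E (\<lambda>X. dual_rank E r (X - L)) = loops E r - L"
proof (rule set_eqI)
  fix e
  have rL: "r L = 0" using mr_loops_zero[OF fin M L] .
  have EL: "E - (E - L) = L" using LE by auto
  have rE': "dual_rank E r (E - L) = int (card (E - L)) - r E" using EL rL by (simp add: dual_rank_def)
  show "e \<in> coloops E (\<lambda>X. dual_rank E r (X - L)) \<longleftrightarrow> e \<in> loops E r - L"
  proof (cases "e \<in> L")
    case True
    then have "E - {e} - L = E - L" by auto
    then show ?thesis using True by (auto simp: coloops_def)
  next
    case False
    show ?thesis
    proof (cases "e \<in> E")
      case eE: True
      have c: "E - {e} - L = (E - L) - {e}" by auto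
      have fEL: "finite (E - L)" using fin by simp
      have eEL: "e \<in> E - L" using eE False by simp
      have cc: "int (card ((E - L) - {e})) = int (card (E - L)) - 1"
        proof -
        have "card (E - L) > 0" using fEL eEL card_gt_0_iff by blast
        thus ?thesis using fEL eEL by (simp add: card_Diff_singleton of_nat_diff)
      qed
      have "E - ((E - L) - {e}) = {e} \<union> L" using eE LE by auto
      moreover have "r ({e} \<union> L) = r {e}" by (rule mr_add_loops[OF fin M]) (use eE L in auto)
      ultimately have rr: "r (E - ((E - L) - {e})) = r {e}" by simp
      have v: "dual_rank E r (E - {e} - L) = int (card (E - L)) - 1 - r E + r {e}"
        unfolding c dual_rank_def using cc rr by simp
      show ?thesis using v rE' eE False by (auto simp: coloops_def loops_def)
    next
      case False
      then show ?thesis by (auto simp: coloops_def loops_def)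
    qed
  qed
qed

lemma mod_core: "core_ground E (\<lambda>X. dual_rank E r (X - L)) = core_ground E r"
  unfolding core_ground_def mod_loops mod_coloops using L by auto

lemma mod_same: "same_matroid (core_ground E r) (\<lambda>X. dual_rank E r (X - L))
                    (dual_rank (core_ground E r) r)"
  unfolding same_matroid_def
proof (intro allI impI)
  fix X assume X: "X \<subseteq> core_ground E r"
  let ?C = "core_ground E r" and ?K = "coloops E r" and ?Lo = "loops E r"
  have CE: "?C \<subseteq> E" by (auto simp: core_ground_def)
  have XE: "X \<subseteq> E" using X CE by auto
  have XL: "X \<inter> L = {}" using X L by (auto simp: core_ground_def)
  have E1: "E = ?C \<union> ?K \<union> ?Lo" by (auto simp: core_ground_def loops_def coloops_def)
  have E2: "E - X = (?C - X) \<union> ?K \<union> ?Lo" using X by (auto simp: core_ground_def loops_def coloops_def)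
  have a: "r E = r ?C + int (card ?K)" using core_decomp[OF fin M, of ?C] E1 by simp
  have b: "r (E - X) = r (?C - X) + int (card ?K)" using core_decomp[OF fin M, of "?C - X"] E2 by auto
  show "dual_rank E r (X - L) = dual_rank ?C r X"
    using mod_val[OF XE] XL a b by (simp add: dual_rank_def)
qed

end


lemma sum_duals:
  assumes S: "sum_of_matroids E \<rho> k M" and X: "X \<subseteq> E"
  shows "(\<Sum>s<k. dual_rank E (M s) X) = int k * int (card X) - \<rho> E + \<rho> (E - X)"
proof -
  have "\<rho> E = (\<Sum>s<k. M s E)" "\<rho> (E - X) = (\<Sum>s<k. M s (E - X))"
    using S unfolding sum_of_matroids_def by auto
  then show ?thesis unfolding dual_rank_def by (simp add: sum.distrib sum_subtractf)
qed

lemma part1: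
  assumes fin: "finite E" and S: "sum_of_matroids E \<rho> i M"
  shows "sum_of_matroids E (i_dual i E \<rho>) i (\<lambda>s. dual_rank E (M s))"
  unfolding sum_of_matroids_def
proof (intro conjI allI impI)
  fix s assume "s < i"
  then have "is_matroid_rank E (M s)" using S unfolding sum_of_matroids_def by auto
  then show "is_matroid_rank E (dual_rank E (M s))" using dual_is_matroid fin by blast
next
  fix X assume "X \<subseteq> E"
  then show "i_dual i E \<rho> X = (\<Sum>s<i. dual_rank E (M s) X)"
    using sum_duals[OF S] by (simp add: i_dual_def)
qed

lemma part2:
  assumes fin: "finite E" and single: "\<forall>e\<in>E. \<rho> {e} \<le> int i"
    and S: "sum_of_matroids E \<rho> k M" and ik: "i \<le> k"
  shows "\<exists>M'. sum_of_matroids E (i_dual i E \<rho>) k M' \<and>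
               (\<forall>s<k. core_ground E (M' s) = core_ground E (M s) \<and>
                  same_matroid (core_ground E (M s)) (M' s)
                    (dual_rank (core_ground E (M s)) (M s)))"
proof -
  have Mm: "\<And>s. s < k \<Longrightarrow> is_matroid_rank E (M s)" using S unfolding sum_of_matroids_def by auto
  define Z where "Z e = {s. s < k \<and> M s {e} = 0}" for e
  have Zc: "k - i \<le> card (Z e)" if eE: "e \<in> E" for e
  proof -
    define On where "On = {s. s < k \<and> M s {e} = 1}"
    have zo: "M s {e} = 0 \<or> M s {e} = 1" if "s < k" for s
    proof -
      have "0 \<le> M s {e}" "M s {e} \<le> int (card {e})"
        using Mm[OF that] eE unfolding is_matroid_rank_def by auto
      then show ?thesis by auto
    qed
    have "\<rho> {e} = (\<Sum>s<k. M s {e})" using S eE unfolding sum_of_matroids_def by auto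
    also have "\<dots> = (\<Sum>s<k. if M s {e} = 1 then 1 else 0)"
      by (rule sum.cong) (use zo in auto)
    also have "\<dots> = (\<Sum>s\<in>{s\<in>{..<k}. M s {e} = 1}. (1::int))"
      by (rule sum.inter_filter[symmetric]) simp
    also have "\<dots> = int (card On)" unfolding On_def by simp
    finally have "int (card On) \<le> int i" using single eE by auto
    moreover have "Z e \<union> On = {..<k}" "Z e \<inter> On = {}" unfolding Z_def On_def using zo by auto
    moreover have "finite (Z e)" "finite On" unfolding Z_def On_def by auto
    ultimately have "card (Z e) + card On = k" by (metis card_Un_disjoint card_lessThan)
    then show ?thesis using \<open>int (card On) \<le> int i\<close> by linarith
  qed
  define T where "T e = (SOME T. T \<subseteq> Z e \<and> card T = k - i)" for e
  have T: "T e \<subseteq> Z e \<and> card (T e) = k - i" if "e \<in> E" for e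
  proof -
    have "\<exists>T. T \<subseteq> Z e \<and> card T = k - i"
      using obtain_subset_with_card_n[OF Zc[OF that]] by metis
    then show ?thesis unfolding T_def by (rule someI_ex)
  qed
  define L where "L s = {e \<in> E. s \<in> T e}" for s
  have Lloops: "L s \<subseteq> loops E (M s)" for s
    using T unfolding L_def loops_def Z_def by auto
  define M' where "M' s = (\<lambda>X. dual_rank E (M s) (X - L s))" for s
  have count: "(\<Sum>s<k. card (X \<inter> L s)) = (k - i) * card X" if X: "X \<subseteq> E" for X
  proof -
    have fX: "finite X" using X fin finite_subset by blast
    have "(\<Sum>s<k. card (X \<inter> L s)) = (\<Sum>s<k. \<Sum>e\<in>X. if s \<in> T e then 1 else 0)"
    proof (rule sum.cong)
      fix s
      have "X \<inter> L s = {e \<in> X. s \<in> T e}" using X unfolding L_def by auto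
      then show "card (X \<inter> L s) = (\<Sum>e\<in>X. if s \<in> T e then 1 else 0)"
        using fX by (simp add: sum.inter_filter[symmetric])
    qed simp
    also have "\<dots> = (\<Sum>e\<in>X. \<Sum>s<k. if s \<in> T e then 1 else 0)" by (rule sum.swap)
    also have "\<dots> = (\<Sum>e\<in>X. k - i)"
    proof (rule sum.cong)
      fix e assume "e \<in> X"
      then have eE: "e \<in> E" using X by auto
      have "(\<Sum>s<k. if s \<in> T e then 1 else 0) = card {s \<in> {..<k}. s \<in> T e}"
        by (simp add: sum.inter_filter[symmetric])
      also have "{s \<in> {..<k}. s \<in> T e} = T e" using T[OF eE] unfolding Z_def by auto
      finally show "(\<Sum>s<k. if s \<in> T e then 1 else 0) = k - i" using T[OF eE] by simp
    qed simp
    finally show ?thesis by simp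
  qed
  have sumM': "i_dual i E \<rho> X = (\<Sum>s<k. M' s X)" if X: "X \<subseteq> E" for X
  proof -
    have "(\<Sum>s<k. M' s X) = (\<Sum>s<k. dual_rank E (M s) X - int (card (X \<inter> L s)))"
      unfolding M'_def by (rule sum.cong) (use mod_val[OF fin Mm Lloops X] in auto)
    also have "\<dots> = (\<Sum>s<k. dual_rank E (M s) X) - (\<Sum>s<k. int (card (X \<inter> L s)))"
      by (simp add: sum_subtractf)
    also have "(\<Sum>s<k. int (card (X \<inter> L s))) = int ((k - i) * card X)"
      using count[OF X] by (metis of_nat_sum)
    also have "int ((k - i) * card X) = (int k - int i) * int (card X)" using ik by simp
    finally show ?thesis using sum_duals[OF S X] by (simp add: i_dual_def algebra_simps)
  qed
  show ?thesis
  proof (intro exI conjI allI impI)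
    show "sum_of_matroids E (i_dual i E \<rho>) k M'"
      unfolding sum_of_matroids_def using sumM' mod_matroid[OF fin Mm Lloops] unfolding M'_def by auto
  next
    fix s assume "s < k"
    show "core_ground E (M' s) = core_ground E (M s)"
      unfolding M'_def using mod_core[OF fin Mm[OF \<open>s < k\<close>] Lloops] .
    show "same_matroid (core_ground E (M s)) (M' s) (dual_rank (core_ground E (M s)) (M s))"
      unfolding M'_def using mod_same[OF fin Mm[OF \<open>s < k\<close>] Lloops] .
  qed
qed


lemma idual_idual:
  assumes fin: "finite E" and e: "\<rho> {} = 0" and X: "X \<subseteq> E"
  shows "i_dual i E (i_dual i E \<rho>) X = \<rho> X"
proof -
  have "card (E - X) = card E - card X" using fin X by (simp add: card_Diff_subset finite_subset)
  moreover have "card X \<le> card E" using fin X by (simp add: card_mono)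
  moreover have "E - (E - X) = X" using X by auto
  ultimately show ?thesis using e by (simp add: i_dual_def of_nat_diff algebra_simps)
qed

lemma idual_single:
  assumes "\<forall>X Y. X \<subseteq> Y \<and> Y \<subseteq> E \<longrightarrow> \<rho> X \<le> \<rho> Y" and "e \<in> E"
  shows "i_dual i E \<rho> {e} \<le> int i"
  using assms by (auto simp: i_dual_def)

lemma sum_cong:
  assumes "\<forall>X. X \<subseteq> E \<longrightarrow> f X = g X"
  shows "sum_of_matroids E f k M = sum_of_matroids E g k M"
  using assms unfolding sum_of_matroids_def by auto

lemma chrom_le:
  assumes fi: "enat i \<le> chromatic_number E f"
    and tr: "\<forall>k M. i \<le> k \<and> sum_of_matroids E f k M \<longrightarrow> (\<exists>M'. sum_of_matroids E g k M')"
    and ex: "\<exists>k>0. \<exists>M. sum_of_matroids E f k M"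
  shows "chromatic_number E g \<le> chromatic_number E f"
proof -
  define a where "a = (LEAST k. k > 0 \<and> (\<exists>M. sum_of_matroids E f k M))"
  have cf: "chromatic_number E f = enat a" using ex unfolding chromatic_number_def a_def by simp
  have Pa: "a > 0 \<and> (\<exists>M. sum_of_matroids E f a M)"
    unfolding a_def by (rule LeastI_ex) (use ex in blast)
  have "i \<le> a" using fi cf by simp
  then have Pg: "a > 0 \<and> (\<exists>M. sum_of_matroids E g a M)" using tr Pa by blast
  then have exg: "\<exists>k>0. \<exists>M. sum_of_matroids E g k M" by blast
  have "(LEAST k. k > 0 \<and> (\<exists>M. sum_of_matroids E g k M)) \<le> a" by (rule Least_le) (rule Pg)
  then show ?thesis using cf exg unfolding chromatic_number_def by simp
qed

lemma chrom_eq: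
  assumes fi: "enat i \<le> chromatic_number E f" and gi: "enat i \<le> chromatic_number E g"
    and tr1: "\<forall>k M. i \<le> k \<and> sum_of_matroids E f k M \<longrightarrow> (\<exists>M'. sum_of_matroids E g k M')"
    and tr2: "\<forall>k M. i \<le> k \<and> sum_of_matroids E g k M \<longrightarrow> (\<exists>M'. sum_of_matroids E f k M')"
  shows "chromatic_number E f = chromatic_number E g"
proof (cases "\<exists>k>0. \<exists>M. sum_of_matroids E f k M")
  case True
  have 1: "chromatic_number E g \<le> chromatic_number E f" using chrom_le[OF fi tr1 True] .
  have "chromatic_number E g \<noteq> \<infinity>"
    using 1 True unfolding chromatic_number_def by (auto split: if_splits)
  then have "\<exists>k>0. \<exists>M. sum_of_matroids E g k M" unfolding chromatic_number_def by (auto split: if_splits)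
  then have "chromatic_number E f \<le> chromatic_number E g" using chrom_le[OF gi tr2] by blast
  then show ?thesis using 1 by simp
next
  case False
  show ?thesis
  proof (cases "\<exists>k>0. \<exists>M. sum_of_matroids E g k M")
    case True
    have 1: "chromatic_number E f \<le> chromatic_number E g" using chrom_le[OF gi tr2 True] .
    have "chromatic_number E f \<noteq> \<infinity>"
      using 1 True unfolding chromatic_number_def by (auto split: if_splits)
    then show ?thesis using False unfolding chromatic_number_def by (auto split: if_splits)
  next
    case F2: False
    then show ?thesis using False unfolding chromatic_number_def by simp
  qed
qed

theorem theorem4p1:
  fixes E :: "'a set" and \<rho> :: "'a set \<Rightarrow> int" and i :: nat
  assumes "finite E" and "is_i_polymatroid i E \<rho>"
  shows "(\<forall>M. sum_of_matroids E \<rho> i M \<longrightarrow>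
            sum_of_matroids E (i_dual i E \<rho>) i (\<lambda>s. dual_rank E (M s)))
       \<and> (\<forall>k M. k \<ge> i \<and> sum_of_matroids E \<rho> k M \<longrightarrow>
            (\<exists>M'. sum_of_matroids E (i_dual i E \<rho>) k M' \<and>
               (\<forall>s<k. core_ground E (M' s) = core_ground E (M s) \<and>
                  same_matroid (core_ground E (M s)) (M' s)
                    (dual_rank (core_ground E (M s)) (M s)))))
       \<and> (min (chromatic_number E \<rho>) (chromatic_number E (i_dual i E \<rho>)) \<ge> enat i \<longrightarrow>
            chromatic_number E \<rho> = chromatic_number E (i_dual i E \<rho>))"
proof (intro conjI allI impI)
  have fin: "finite E" using assms(1) .
  have e0: "\<rho> {} = 0" and mono: "\<forall>X Y. X \<subseteq> Y \<and> Y \<subseteq> E \<longrightarrow> \<rho> X \<le> \<rho> Y"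
    and single: "\<forall>e\<in>E. \<rho> {e} \<le> int i"
    using assms(2) unfolding is_i_polymatroid_def is_polymatroid_def by auto
  have single': "\<forall>e\<in>E. i_dual i E \<rho> {e} \<le> int i" using idual_single[OF mono] by blast
  fix M assume "sum_of_matroids E \<rho> i M"
  then show "sum_of_matroids E (i_dual i E \<rho>) i (\<lambda>s. dual_rank E (M s))" using part1[OF fin] by blast
next
  fix k M assume "i \<le> k \<and> sum_of_matroids E \<rho> k M"
  then show "\<exists>M'. sum_of_matroids E (i_dual i E \<rho>) k M' \<and>
               (\<forall>s<k. core_ground E (M' s) = core_ground E (M s) \<and>
                  same_matroid (core_ground E (M s)) (M' s)
                    (dual_rank (core_ground E (M s)) (M s)))"
    using part2[OF assms(1)] assms(2) unfolding is_i_polymatroid_def by blast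
next
  assume m: "enat i \<le> min (chromatic_number E \<rho>) (chromatic_number E (i_dual i E \<rho>))"
  have fin: "finite E" using assms(1) .
  have e0: "\<rho> {} = 0" and mono: "\<forall>X Y. X \<subseteq> Y \<and> Y \<subseteq> E \<longrightarrow> \<rho> X \<le> \<rho> Y"
    and single: "\<forall>e\<in>E. \<rho> {e} \<le> int i"
    using assms(2) unfolding is_i_polymatroid_def is_polymatroid_def by auto
  have single': "\<forall>e\<in>E. i_dual i E \<rho> {e} \<le> int i" using idual_single[OF mono] by blast
  show "chromatic_number E \<rho> = chromatic_number E (i_dual i E \<rho>)"
  proof (rule chrom_eq)
    show "enat i \<le> chromatic_number E \<rho>" "enat i \<le> chromatic_number E (i_dual i E \<rho>)"
      using m by auto
    show "\<forall>k M. i \<le> k \<and> sum_of_matroids E \<rho> k M \<longrightarrow> (\<exists>M'. sum_of_matroids E (i_dual i E \<rho>) k M')"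
      using part2[OF fin single] by blast
    show "\<forall>k M. i \<le> k \<and> sum_of_matroids E (i_dual i E \<rho>) k M \<longrightarrow> (\<exists>M'. sum_of_matroids E \<rho> k M')"
    proof (intro allI impI)
      fix k M assume h: "i \<le> k \<and> sum_of_matroids E (i_dual i E \<rho>) k M"
      then obtain M' where "sum_of_matroids E (i_dual i E (i_dual i E \<rho>)) k M'"
        using part2[OF fin single'] by blast
      moreover have "\<forall>X. X \<subseteq> E \<longrightarrow> i_dual i E (i_dual i E \<rho>) X = \<rho> X"
        using idual_idual[where \<rho>=\<rho>, OF fin e0] by blast
      ultimately show "\<exists>M'. sum_of_matroids E \<rho> k M'" using sum_cong by blast
    qed
  qed
qed

end
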